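(* Let $W_1,\dots,W_n$ be proper subspaces of $\mathbb R^d$ with orthogonal projections $P_1,\dots,P_n$, and suppose there exist scalars $a_1,\dots,a_n\in\mathbb R$ and $A>0$ such that $\sum_{i=1}^n a_i^2P_i=A\cdot I$. Then both $\{W_i\}_{i=1}^n$ and $\{W_i^\perp\}_{i=1}^n$ do norm retrieval on $\mathbb R^d$.
   Context: A family of subspaces $\{V_i\}_{i=1}^n$ of $\mathbb R^d$ with orthogonal projections $\{Q_i\}$ does norm retrieval if whenever $x,y\in\mathbb R^d$ satisfy $\|Q_ix\|=\|Q_iy\|$ for all $i$, then $\|x\|=\|y\|$. *)

theory Defs
  imports "HOL-Analysis.Analysis"
begin

definition orth_proj :: "'a::euclidean_space set \<Rightarrow> 'a \<Rightarrow> 'a" where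
  "orth_proj W x = (THE y. y \<in> W \<and> (\<forall>w\<in>W. orthogonal (x - y) w))"

definition norm_retrieval :: "nat \<Rightarrow> (nat \<Rightarrow> 'a::euclidean_space set) \<Rightarrow> bool" where
  "norm_retrieval n V \<longleftrightarrow>
     (\<forall>x y. (\<forall>i<n. norm (orth_proj (V i) x) = norm (orth_proj (V i) y)) \<longrightarrow> norm x = norm y)"

end

theory Submission
  imports Defs
begin

lemma orth_proj_unique:
  fixes U :: "'a::euclidean_space set"
  assumes "subspace U" "y \<in> U" "\<forall>w\<in>U. orthogonal (x - y) w"
  shows "orth_proj U x = y"
  unfolding orth_proj_def
proof (rule the_equality)
  show "y \<in> U \<and> (\<forall>w\<in>U. orthogonal (x - y) w)" using assms by auto
next
  fix z assume z: "z \<in> U \<and> (\<forall>w\<in>U. orthogonal (x - z) w)"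
  have d: "y - z \<in> U" using assms(1,2) z by (simp add: subspace_diff)
  have "orthogonal (x - z) (y - z)" "orthogonal (x - y) (y - z)" using z assms d by auto
  hence "(y - z) \<bullet> (y - z) = 0"
    unfolding orthogonal_def by (simp add: inner_diff_left inner_diff_right)
  thus "z = y" by simp
qed

lemma orth_proj_props:
  fixes U :: "'a::euclidean_space set"
  assumes "subspace U"
  shows "orth_proj U x \<in> U \<and> (\<forall>w\<in>U. orthogonal (x - orth_proj U x) w)"
proof -
  obtain y z where yz: "y \<in> span U" "\<And>w. w \<in> span U \<Longrightarrow> orthogonal z w" "x = y + z"
    by (rule orthogonal_subspace_decomp_exists[of U x]) blast
  have s: "span U = U" using assms by (simp add: span_eq_iff)
  have xy: "x - y = z" using yz(3) by simp
  have o: "\<forall>w\<in>U. orthogonal (x - y) w" unfolding xy using yz(2) s by auto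
  have y: "y \<in> U" using yz(1) s by simp
  have "orth_proj U x = y"
    by (rule orth_proj_unique[OF assms y o])
  thus ?thesis using y o by simp
qed

lemma orth_proj_comp:
  fixes U :: "'a::euclidean_space set"
  assumes "subspace U"
  shows "orth_proj (orthogonal_comp U) x = x - orth_proj U x"
proof (rule orth_proj_unique)
  show "subspace (orthogonal_comp U)" by (rule subspace_orthogonal_comp)
  have p: "orth_proj U x \<in> U" "\<And>w. w \<in> U \<Longrightarrow> (x - orth_proj U x) \<bullet> w = 0"
    using orth_proj_props[OF assms, of x] unfolding orthogonal_def by auto
  show "x - orth_proj U x \<in> orthogonal_comp U"
    unfolding orthogonal_comp_def orthogonal_def using p(2) by (simp add: inner_commute)
  show "\<forall>w\<in>orthogonal_comp U. orthogonal (x - (x - orth_proj U x)) w"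
    unfolding orthogonal_comp_def orthogonal_def using p(1) by simp
qed

lemma inner_proj:
  fixes U :: "'a::euclidean_space set"
  assumes "subspace U"
  shows "x \<bullet> orth_proj U x = (norm (orth_proj U x))^2"
proof -
  have "orthogonal (x - orth_proj U x) (orth_proj U x)" using orth_proj_props[OF assms, of x] by auto
  hence "(x - orth_proj U x) \<bullet> orth_proj U x = 0" by (simp add: orthogonal_def)
  thus ?thesis by (simp add: inner_diff_left power2_norm_eq_inner)
qed

lemma norm_comp:
  fixes U :: "'a::euclidean_space set"
  assumes "subspace U"
  shows "(norm (x - orth_proj U x))^2 = (norm x)^2 - (norm (orth_proj U x))^2"
proof -
  have h: "x \<bullet> orth_proj U x = orth_proj U x \<bullet> orth_proj U x"
    using inner_proj[OF assms, of x] by (simp add: power2_norm_eq_inner)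
  have h2: "orth_proj U x \<bullet> x = orth_proj U x \<bullet> orth_proj U x"
    using h by (simp add: inner_commute)
  show ?thesis unfolding power2_norm_eq_inner inner_diff_left inner_diff_right h h2 by simp
qed

theorem mainTheorem2:
  fixes W :: "nat \<Rightarrow> 'a::euclidean_space set" and n :: nat
    and a :: "nat \<Rightarrow> real" and A :: real
  assumes "\<And>i. i < n \<Longrightarrow> subspace (W i)"
    and "\<And>i. i < n \<Longrightarrow> W i \<noteq> UNIV"
    and "A > 0"
    and "\<And>x. (\<Sum>i<n. (a i)^2 *\<^sub>R orth_proj (W i) x) = A *\<^sub>R x"
  shows "norm_retrieval n W \<and> norm_retrieval n (\<lambda>i. orthogonal_comp (W i))"
proof -
  have key: "(\<Sum>i<n. (a i)^2 * (norm (orth_proj (W i) x))^2) = A * (norm x)^2" for x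
  proof -
    have "x \<bullet> (\<Sum>i<n. (a i)^2 *\<^sub>R orth_proj (W i) x) = x \<bullet> (A *\<^sub>R x)" using assms(4) by simp
    hence "(\<Sum>i<n. (a i)^2 * (x \<bullet> orth_proj (W i) x)) = A * (norm x)^2"
      by (simp add: inner_sum_right power2_norm_eq_inner)
    moreover have "(\<Sum>i<n. (a i)^2 * (x \<bullet> orth_proj (W i) x)) = (\<Sum>i<n. (a i)^2 * (norm (orth_proj (W i) x))^2)"
      by (rule sum.cong) (simp_all add: inner_proj assms(1))
    ultimately show ?thesis by simp
  qed
  define S where "S = (\<Sum>i<n. (a i)^2)"
  have key2: "(\<Sum>i<n. (a i)^2 * (norm (orth_proj (orthogonal_comp (W i)) x))^2) = (S - A) * (norm x)^2" for x
  proof -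
    have "(\<Sum>i<n. (a i)^2 * (norm (orth_proj (orthogonal_comp (W i)) x))^2)
        = (\<Sum>i<n. (a i)^2 * (norm x)^2 - (a i)^2 * (norm (orth_proj (W i) x))^2)"
    proof (rule sum.cong)
      fix i assume "i \<in> {..<n}"
      hence si: "subspace (W i)" using assms(1) by simp
      have "(norm (orth_proj (orthogonal_comp (W i)) x))^2 = (norm x)^2 - (norm (orth_proj (W i) x))^2"
        unfolding orth_proj_comp[OF si] by (rule norm_comp[OF si])
      thus "(a i)^2 * (norm (orth_proj (orthogonal_comp (W i)) x))^2 = (a i)^2 * (norm x)^2 - (a i)^2 * (norm (orth_proj (W i) x))^2"
        by (simp add: right_diff_distrib)
    qed simp
    also have "\<dots> = S * (norm x)^2 - A * (norm x)^2"
      by (simp add: sum_subtractf key S_def sum_distrib_right)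
    finally show ?thesis by (simp add: left_diff_distrib)
  qed
  have SA: "S \<noteq> A"
  proof
    assume SA: "S = A"
    have "\<exists>i<n. a i \<noteq> 0"
    proof (rule ccontr)
      assume "\<not> ?thesis" hence "S = 0" unfolding S_def by auto
      thus False using SA assms(3) by simp
    qed
    then obtain i where i: "i < n" "a i \<noteq> 0" by blast
    have "W i = UNIV"
    proof -
      { fix x
        have z: "(\<Sum>j<n. (a j)^2 * (norm (orth_proj (orthogonal_comp (W j)) x))^2) = 0"
          using key2[of x] SA by simp
        have "(a i)^2 * (norm (orth_proj (orthogonal_comp (W i)) x))^2 = 0"
        proof -
          have "\<forall>j\<in>{..<n}. (a j)^2 * (norm (orth_proj (orthogonal_comp (W j)) x))^2 = 0"
            by (rule sum_nonneg_eq_0_iff[THEN iffD1, OF _ _ z]) simp_all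
          thus ?thesis using i(1) by blast
        qed
        hence "(norm (orth_proj (orthogonal_comp (W i)) x))^2 = 0" using i(2) by simp
        hence "x - orth_proj (W i) x = 0" using orth_proj_comp[OF assms(1)[OF i(1)], of x] by simp
        hence "x \<in> W i" using orth_proj_props[OF assms(1)[OF i(1)], of x] by simp }
      thus ?thesis by auto
    qed
    thus False using assms(2) i by simp
  qed
  show ?thesis
  proof
    show "norm_retrieval n W" unfolding norm_retrieval_def
    proof (intro allI impI)
      fix x y :: 'a
      assume h: "\<forall>i<n. norm (orth_proj (W i) x) = norm (orth_proj (W i) y)"
      have "(\<Sum>i<n. (a i)^2 * (norm (orth_proj (W i) x))^2) = (\<Sum>i<n. (a i)^2 * (norm (orth_proj (W i) y))^2)"
        by (rule sum.cong) (simp_all add: h)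
      hence "A * (norm x)^2 = A * (norm y)^2" using key[of x] key[of y] by simp
      hence "(norm x)^2 = (norm y)^2" using assms(3) by simp
      thus "norm x = norm y" by (simp add: power2_eq_iff_nonneg)
    qed
    show "norm_retrieval n (\<lambda>i. orthogonal_comp (W i))" unfolding norm_retrieval_def
    proof (intro allI impI)
      fix x y :: 'a
      assume h: "\<forall>i<n. norm (orth_proj (orthogonal_comp (W i)) x) = norm (orth_proj (orthogonal_comp (W i)) y)"
      have "(\<Sum>i<n. (a i)^2 * (norm (orth_proj (orthogonal_comp (W i)) x))^2) = (\<Sum>i<n. (a i)^2 * (norm (orth_proj (orthogonal_comp (W i)) y))^2)"
        by (rule sum.cong) (simp_all add: h)
      hence "(S - A) * (norm x)^2 = (S - A) * (norm y)^2" using key2[of x] key2[of y] by simp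
      hence "(norm x)^2 = (norm y)^2" using SA by simp
      thus "norm x = norm y" by (simp add: power2_eq_iff_nonneg)
    qed
  qed
qed

end
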